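(* Let $r>0$, let $\widehat\mu:[0,\infty)\to\mathbb R$ and $\sigma:[0,\infty)\to(0,\infty)$ be globally Lipschitz continuous, and suppose there are constants $\kappa>0$ and $c>0$ such that $x\mapsto\widehat\mu(x)-(r-c)x$ is strictly decreasing on $[\kappa,\infty)$. Let $\widehat\psi\in C^2[0,\infty)$ be the increasing solution of $$\frac{\sigma^2(x)}{2}\widehat\psi''(x)+\widehat\mu(x)\widehat\psi'(x)=r\widehat\psi(x),\qquad\widehat\psi'(0)=1,\ \widehat\psi(0)=0.$$ Then: (I) $\widehat\psi'(x)>0$ for all $x\ge0$. (II) There exists a unique point $b_1\in[\kappa,\infty)$ such that $\widehat\psi''(x)<0$ for $x\in(\kappa,b_1)$ and $\widehat\psi''(x)>0$ for $x\in(b_1,\infty)$. (III) $\dfrac{n}{\widehat\psi(n)}\to0$ as $n\to\infty$. *)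

theory Defs
  imports "HOL-Analysis.Analysis"
begin

end

theory Submission
  imports Defs
begin

lemma mvt_ge:
  fixes f f' :: "real \<Rightarrow> real"
  assumes "a < b" "\<And>x. a \<le> x \<Longrightarrow> x \<le> b \<Longrightarrow> (f has_real_derivative f' x) (at x)"
    "\<And>x. a < x \<Longrightarrow> x < b \<Longrightarrow> f' x \<ge> m"
  shows "f b - f a \<ge> m * (b - a)"
proof -
  obtain z where z: "a < z" "z < b" "f b - f a = (b - a) * f' z"
    using MVT2[OF assms(1,2)] by blast
  have "m * (b - a) \<le> f' z * (b - a)"
    using assms(3)[OF z(1,2)] assms(1) by (intro mult_right_mono) auto
  then show ?thesis using z(3) by (simp add: mult.commute)
qed

lemma mvt_gt:
  fixes f f' :: "real \<Rightarrow> real"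
  assumes "a < b" "\<And>x. a \<le> x \<Longrightarrow> x \<le> b \<Longrightarrow> (f has_real_derivative f' x) (at x)"
    "\<And>x. a < x \<Longrightarrow> x < b \<Longrightarrow> f' x > m"
  shows "f b - f a > m * (b - a)"
proof -
  obtain z where z: "a < z" "z < b" "f b - f a = (b - a) * f' z"
    using MVT2[OF assms(1,2)] by blast
  have "m * (b - a) < f' z * (b - a)"
    using assms(3)[OF z(1,2)] assms(1) by (intro mult_strict_right_mono) auto
  then show ?thesis using z(3) by (simp add: mult.commute)
qed

theorem lemmaA1:
  fixes r \<kappa> c :: real
    and \<mu> \<sigma> \<psi> \<psi>' \<psi>'' :: "real \<Rightarrow> real"
  assumes r_pos: "r > 0"
    and mu_lip: "\<exists>L. L-lipschitz_on {0..} \<mu>"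
    and sigma_lip: "\<exists>L. L-lipschitz_on {0..} \<sigma>"
    and sigma_pos: "\<And>x. x \<ge> 0 \<Longrightarrow> \<sigma> x > 0"
    and kappa_pos: "\<kappa> > 0" and c_pos: "c > 0"
    and strict_dec: "strict_antimono_on {\<kappa>..} (\<lambda>x. \<mu> x - (r - c) * x)"
    and d1: "\<And>x. x \<ge> 0 \<Longrightarrow> (\<psi> has_real_derivative \<psi>' x) (at x within {0..})"
    and d2: "\<And>x. x \<ge> 0 \<Longrightarrow> (\<psi>' has_real_derivative \<psi>'' x) (at x within {0..})"
    and d2_cont: "continuous_on {0..} \<psi>''"
    and ode: "\<And>x. x \<ge> 0 \<Longrightarrow> (\<sigma> x)\<^sup>2 / 2 * \<psi>'' x + \<mu> x * \<psi>' x = r * \<psi> x"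
    and init: "\<psi>' 0 = 1" "\<psi> 0 = 0"
    and incr: "mono_on {0..} \<psi>"
  shows "(\<forall>x \<ge> 0. \<psi>' x > 0)
       \<and> (\<exists>!b1. b1 \<ge> \<kappa> \<and> (\<forall>x. \<kappa> < x \<and> x < b1 \<longrightarrow> \<psi>'' x < 0)
                          \<and> (\<forall>x. x > b1 \<longrightarrow> \<psi>'' x > 0))
       \<and> (\<lambda>n::nat. real n / \<psi> (real n)) \<longlonglongrightarrow> 0"
proof -
  have D1: "(\<psi> has_real_derivative \<psi>' x) (at x)" if "x > 0" for x
    using d1[of x] that at_within_interior[of x "{0..}"] by simp
  have D2: "(\<psi>' has_real_derivative \<psi>'' x) (at x)" if "x > 0" for x
    using d2[of x] that at_within_interior[of x "{0..}"] by simp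
  have cont1: "continuous_on {0..} \<psi>"
    by (rule DERIV_continuous_on[OF d1]) simp
  have cont2: "continuous_on {0..} \<psi>'"
    by (rule DERIV_continuous_on[OF d2]) simp
  have psi_nn: "\<psi> x \<ge> 0" if "x \<ge> 0" for x
    using mono_onD[OF incr, of 0 x] that init(2) by simp
  obtain Lm where Lm: "Lm-lipschitz_on {0..} \<mu>" using mu_lip by blast
  have cont_mu: "continuous_on {0..} \<mu>" using lipschitz_on_continuous_on[OF Lm] .
  obtain Ls where Ls: "Ls-lipschitz_on {0..} \<sigma>" using sigma_lip by blast
  have hdec: "\<mu> y - (r - c) * y < \<mu> x - (r - c) * x" if "\<kappa> \<le> x" "x < y" for x y
    using strict_dec that unfolding monotone_on_def by auto
  have partI: "\<psi>' x > 0" if "x \<ge> 0" for x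
  proof (rule ccontr)
    assume "\<not> \<psi>' x > 0"
    hence nx: "\<psi>' x \<le> 0" by simp
    define Z where "Z = {0..} \<inter> \<psi>' -` {0}"
    have Zc: "closed Z" unfolding Z_def
      by (rule continuous_closed_preimage[OF cont2]) auto
    have cx: "continuous_on {0..x} \<psi>'" by (rule continuous_on_subset[OF cont2]) auto
    obtain y where y: "y \<ge> 0" "y \<le> x" "\<psi>' y = 0"
      using IVT2'[of \<psi>' x 0 0, OF nx _ \<open>0 \<le> x\<close> cx] init(1) by auto
    have Zne: "Z \<noteq> {}" using y unfolding Z_def by auto
    have Zb: "bdd_below Z" unfolding Z_def by (rule bdd_belowI[of _ 0]) auto
    define x0 where "x0 = Inf Z"
    have x0Z: "x0 \<in> Z" unfolding x0_def by (rule closed_contains_Inf[OF Zne Zb Zc])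
    hence x0: "x0 \<ge> 0" "\<psi>' x0 = 0" unfolding Z_def by auto
    have x0p: "x0 > 0" using x0 init(1) by (cases "x0 = 0") auto
    have nozero: "\<psi>' z \<noteq> 0" if "0 \<le> z" "z < x0" for z
    proof
      assume "\<psi>' z = 0"
      hence "z \<in> Z" using that unfolding Z_def by auto
      hence "x0 \<le> z" unfolding x0_def using Zb by (rule cInf_lower)
      thus False using that by simp
    qed
    have pos_before: "\<psi>' z > 0" if "0 \<le> z" "z < x0" for z
    proof (rule ccontr)
      have z0: "0 \<le> z" using that(1) .
      assume "\<not> \<psi>' z > 0"
      hence nz: "\<psi>' z \<le> 0" by simp
      have cz: "continuous_on {0..z} \<psi>'" by (rule continuous_on_subset[OF cont2]) auto
      obtain w where "w \<ge> 0" "w \<le> z" "\<psi>' w = 0"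
        using IVT2'[of \<psi>' z 0 0, OF nz _ z0 cz] init(1) by auto
      thus False using nozero[of w] that by simp
    qed
    have "\<psi> x0 - \<psi> 0 > 0 * (x0 - 0)"
    proof -
      obtain l z where lz: "0 < z" "z < x0" "(\<psi> has_real_derivative l) (at z)" "\<psi> x0 - \<psi> 0 = (x0 - 0) * l"
        using MVT[OF x0p continuous_on_subset[OF cont1, of "{0..x0}"]] D1 real_differentiable_def by auto
      have "l = \<psi>' z" using DERIV_unique[OF lz(3) D1[OF lz(1)]] .
      thus ?thesis using lz pos_before[of z] x0p by simp
    qed
    hence psx0: "\<psi> x0 > 0" using init by simp
    have "(\<sigma> x0)\<^sup>2 / 2 * \<psi>'' x0 = r * \<psi> x0" using ode[OF x0(1)] x0(2) by simp
    moreover have "(\<sigma> x0)\<^sup>2 / 2 > 0" using sigma_pos[OF x0(1)] by simp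
    ultimately have pp: "\<psi>'' x0 > 0" using psx0 r_pos
      by (metis mult_pos_pos zero_less_mult_pos)
    obtain d where d: "d > 0" "\<And>h. h > 0 \<Longrightarrow> h < d \<Longrightarrow> \<psi>' (x0 - h) < \<psi>' x0"
      using DERIV_pos_inc_left[OF D2[OF x0p] pp] by blast
    define h where "h = min (d/2) (x0/2)"
    have "\<psi>' (x0 - h) < 0" using d(2)[of h] d(1) x0p x0(2) unfolding h_def by simp
    moreover have "\<psi>' (x0 - h) > 0" using pos_before[of "x0 - h"] d(1) x0p unfolding h_def by simp
    ultimately show False by simp
  qed
  define h where "h = (\<lambda>x. \<mu> x - (r - c) * x)"
  define k where "k = (\<lambda>x. r * \<psi> x / \<psi>' x - (r - c) * x)"
  define g where "g = (\<lambda>x. r * \<psi> x / \<psi>' x - \<mu> x)"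
  define kd where "kd = (\<lambda>x. r - r * \<psi> x * \<psi>'' x / (\<psi>' x)\<^sup>2 - (r - c))"
  have gkh: "g x = k x - h x" for x unfolding g_def k_def h_def by simp
  have hdec': "h y < h x" if "\<kappa> \<le> x" "x < y" for x y
    using hdec[OF that] unfolding h_def .
  have rel: "(\<sigma> x)\<^sup>2 / 2 * \<psi>'' x = \<psi>' x * g x" if "x \<ge> 0" for x
  proof -
    have "\<psi>' x \<noteq> 0" using partI[OF that] by simp
    have e: "(\<sigma> x)\<^sup>2 / 2 * \<psi>'' x = r * \<psi> x - \<mu> x * \<psi>' x" using ode[OF that] by linarith
    have "\<psi>' x * g x = r * \<psi> x - \<mu> x * \<psi>' x"
      using \<open>\<psi>' x \<noteq> 0\<close> unfolding g_def by (simp add: field_simps)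
    then show ?thesis using e by simp
  qed
  have spos: "(\<sigma> x)\<^sup>2 / 2 > 0" if "x \<ge> 0" for x using sigma_pos[OF that] by simp
  have sg_pos: "\<psi>'' x > 0 \<longleftrightarrow> g x > 0" if "x \<ge> 0" for x
    using rel[OF that] spos[OF that] partI[OF that] zero_less_mult_iff[of "(\<sigma> x)\<^sup>2 / 2" "\<psi>'' x"]
      zero_less_mult_iff[of "\<psi>' x" "g x"] by auto
  have sg_neg: "\<psi>'' x < 0 \<longleftrightarrow> g x < 0" if "x \<ge> 0" for x
    using rel[OF that] spos[OF that] partI[OF that] mult_less_0_iff[of "(\<sigma> x)\<^sup>2 / 2" "\<psi>'' x"]
      mult_less_0_iff[of "\<psi>' x" "g x"] by auto
  have sg_zero: "\<psi>'' x = 0 \<longleftrightarrow> g x = 0" if "x \<ge> 0" for x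
    using sg_pos[OF that] sg_neg[OF that] by linarith
  have Dk: "(k has_real_derivative kd x) (at x)" if "x > 0" for x
  proof -
    have nz: "\<psi>' x \<noteq> 0" using partI[of x] that by simp
    show ?thesis unfolding k_def kd_def
      using that nz by (auto intro!: derivative_eq_intros D1 D2 simp: field_simps power2_eq_square)
  qed
  have kd_ge: "kd x \<ge> c" if "x > 0" "\<psi>'' x \<le> 0" for x
  proof -
    have "r * \<psi> x * \<psi>'' x \<le> 0"
      using psi_nn[of x] that r_pos by (simp add: mult_nonneg_nonpos)
    hence "r * \<psi> x * \<psi>'' x / (\<psi>' x)\<^sup>2 \<le> 0" by (intro divide_nonpos_nonneg) auto
    thus ?thesis unfolding kd_def by simp
  qed
  have contg: "continuous_on {0..} g" unfolding g_def
    using partI by (intro continuous_intros cont1 cont2 cont_mu) (auto, fastforce)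
  have LA: "g b \<ge> 0" if ab: "\<kappa> \<le> a" "a < b" "g a \<ge> 0" for a b
  proof (rule ccontr)
    assume "\<not> g b \<ge> 0"
    hence gb: "g b < 0" by simp
    define T where "T = {a..b} \<inter> g -` {0..}"
    have Tc: "closed T" unfolding T_def
      by (rule continuous_closed_preimage[OF continuous_on_subset[OF contg]]) (use ab kappa_pos in auto)
    have "a \<in> T" using ab unfolding T_def by auto
    hence Tne: "T \<noteq> {}" by blast
    have Tb: "bdd_above T" unfolding T_def by (rule bdd_aboveI[of _ b]) auto
    define m where "m = Sup T"
    have mT: "m \<in> T" unfolding m_def by (rule closed_contains_Sup[OF Tne Tb Tc])
    hence m: "a \<le> m" "m \<le> b" "g m \<ge> 0" unfolding T_def by auto
    have mb: "m < b" using m gb by (cases "m = b") auto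
    have neg: "g z < 0" if "m < z" "z < b" for z
    proof (rule ccontr)
      assume "\<not> g z < 0"
      hence "z \<in> T" using that m unfolding T_def by auto
      hence "z \<le> m" unfolding m_def using Tb by (rule cSup_upper)
      thus False using that by simp
    qed
    have "k b - k m \<ge> c * (b - m)"
    proof (rule mvt_ge[OF mb])
      fix x assume "m \<le> x" "x \<le> b"
      thus "(k has_real_derivative kd x) (at x)" using Dk m ab kappa_pos by simp
    next
      fix x assume x: "m < x" "x < b"
      have "\<psi>'' x < 0" using sg_neg[of x] neg[OF x] x m ab kappa_pos by simp
      thus "kd x \<ge> c" using kd_ge[of x] x m ab kappa_pos by simp
    qed
    hence "k b > k m" using mb c_pos by (smt (verit) mult_pos_pos)
    moreover have "h b < h m" using hdec'[of m b] m ab mb by simp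
    ultimately have "g b > g m" using gkh by simp
    thus False using m gb by simp
  qed
  have LB: "g b > 0" if ab: "\<kappa> \<le> a" "a < b" "g a \<ge> 0" for a b
  proof (rule ccontr)
    assume "\<not> g b > 0"
    hence gb: "g b = 0" using LA[OF ab] by simp
    have b0: "b > 0" using ab kappa_pos by simp
    have "\<psi>'' b = 0" using sg_zero[of b] gb b0 by simp
    hence kdb: "kd b = c" unfolding kd_def by simp
    obtain d where d: "d > 0" "\<And>t. t > 0 \<Longrightarrow> t < d \<Longrightarrow> k (b - t) < k b"
      using DERIV_pos_inc_left[OF Dk[OF b0]] kdb c_pos by auto
    define t where "t = min (d/2) ((b - a)/2)"
    have t: "t > 0" "t < d" "a < b - t" using d(1) ab unfolding t_def by (auto simp: min_def field_simps)
    have "k (b - t) < k b" using d(2) t by simp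
    moreover have "h (b - t) > h b" using hdec'[of "b - t" b] t ab by simp
    ultimately have "g (b - t) < g b" using gkh by simp
    moreover have "g (b - t) \<ge> 0" using LA[of a "b - t"] ab t by simp
    ultimately show False using gb by simp
  qed
  have EX: "\<exists>x\<ge>\<kappa>. g x \<ge> 0"
  proof (rule ccontr)
    assume "\<not> (\<exists>x\<ge>\<kappa>. g x \<ge> 0)"
    hence all: "\<And>x. x \<ge> \<kappa> \<Longrightarrow> g x < 0" using not_le by blast
    define X where "X = \<kappa> + \<bar>h \<kappa> - k \<kappa>\<bar> / c + 1"
    have "\<bar>h \<kappa> - k \<kappa>\<bar> / c \<ge> 0" using c_pos by simp
    hence X: "\<kappa> < X" unfolding X_def by linarith
    have "k X - k \<kappa> \<ge> c * (X - \<kappa>)"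
    proof (rule mvt_ge[OF X])
      fix x assume "\<kappa> \<le> x" "x \<le> X"
      thus "(k has_real_derivative kd x) (at x)" using Dk kappa_pos by simp
    next
      fix x assume x: "\<kappa> < x" "x < X"
      have "\<psi>'' x < 0" using sg_neg[of x] all[of x] x kappa_pos by simp
      thus "kd x \<ge> c" using kd_ge[of x] x kappa_pos by simp
    qed
    moreover have "c * (X - \<kappa>) = \<bar>h \<kappa> - k \<kappa>\<bar> + c" unfolding X_def using c_pos
      by (simp add: field_simps)
    moreover have "k X < h X" using all[of X] X gkh[of X] by simp
    moreover have "h X < h \<kappa>" using hdec'[of \<kappa> X] X by simp
    ultimately show False using abs_ge_self[of "h \<kappa> - k \<kappa>"] c_pos by linarith
  qed
  define S where "S = {x. x \<ge> \<kappa> \<and> g x \<ge> 0}"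
  define b1 where "b1 = Inf S"
  have Sne: "S \<noteq> {}" using EX unfolding S_def by auto
  have Sb: "bdd_below S" unfolding S_def by (rule bdd_belowI[of _ \<kappa>]) auto
  have b1k: "b1 \<ge> \<kappa>" unfolding b1_def using Sne by (rule cInf_greatest) (auto simp: S_def)
  have above: "\<psi>'' x > 0" if "x > b1" for x
  proof -
    obtain s where s: "s \<in> S" "s < x" using cInf_lessD[OF Sne, of x] \<open>x > b1\<close> unfolding b1_def by auto
    have "g x > 0" using LB[of s x] s unfolding S_def by auto
    thus ?thesis using sg_pos[of x] that b1k kappa_pos by simp
  qed
  have below: "\<psi>'' x < 0" if "\<kappa> < x" "x < b1" for x
  proof -
    have "x \<notin> S"
    proof
      assume "x \<in> S"
      hence "b1 \<le> x" unfolding b1_def using Sb by (rule cInf_lower)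
      thus False using that by simp
    qed
    hence "g x < 0" using that unfolding S_def by auto
    thus ?thesis using sg_neg[of x] that kappa_pos by simp
  qed
  have uniq: "\<not> (b < b')" if "b \<ge> \<kappa>" "\<forall>x. x > b \<longrightarrow> \<psi>'' x > 0"
    "\<forall>x. \<kappa> < x \<and> x < b' \<longrightarrow> \<psi>'' x < 0" for b b'
  proof
    assume "b < b'"
    define x where "x = (b + b') / 2"
    have "x > b" "x < b'" using \<open>b < b'\<close> unfolding x_def by auto
    thus False using that by force
  qed
  have partII: "\<exists>!b1. b1 \<ge> \<kappa> \<and> (\<forall>x. \<kappa> < x \<and> x < b1 \<longrightarrow> \<psi>'' x < 0)
                          \<and> (\<forall>x. x > b1 \<longrightarrow> \<psi>'' x > 0)"
  proof (rule ex1I[of _ b1])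
    show "b1 \<ge> \<kappa> \<and> (\<forall>x. \<kappa> < x \<and> x < b1 \<longrightarrow> \<psi>'' x < 0) \<and> (\<forall>x. x > b1 \<longrightarrow> \<psi>'' x > 0)"
      using b1k above below by auto
  next
    fix y assume y: "y \<ge> \<kappa> \<and> (\<forall>x. \<kappa> < x \<and> x < y \<longrightarrow> \<psi>'' x < 0) \<and> (\<forall>x. x > y \<longrightarrow> \<psi>'' x > 0)"
    have "\<not> y < b1" using uniq[of y b1] y below by auto
    moreover have "\<not> b1 < y" using uniq[of b1 y] y above b1k by auto
    ultimately show "y = b1" by simp
  qed
  define B where "B = b1 + 1"
  have B: "B > b1" "B > 0" "B \<ge> \<kappa>" unfolding B_def using b1k kappa_pos by auto
  have mono': "\<psi>' a \<le> \<psi>' b" if "B \<le> a" "a \<le> b" for a b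
  proof (cases "a = b")
    case False
    hence ab: "a < b" using that by simp
    have "\<psi>' b - \<psi>' a \<ge> 0 * (b - a)"
    proof (rule mvt_ge[OF ab])
      fix x assume "a \<le> x" "x \<le> b"
      thus "(\<psi>' has_real_derivative \<psi>'' x) (at x)" using D2 B that by simp
    next
      fix x assume "a < x" "x < b"
      thus "\<psi>'' x \<ge> 0" using above[of x] B that by simp
    qed
    thus ?thesis by simp
  qed simp
  define l where "l = \<psi>' B"
  have lpos: "l > 0" unfolding l_def using partI B by simp
  have lle: "\<psi>' x \<ge> l" if "x \<ge> B" for x unfolding l_def using mono'[of B x] that by simp
  have psi_lin: "\<psi> x \<ge> \<psi> a + m * (x - a)" if "B \<le> a" "a \<le> x" "\<And>y. a \<le> y \<Longrightarrow> \<psi>' y \<ge> m" for a x m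
  proof (cases "a = x")
    case False
    hence ax: "a < x" using that by simp
    have "\<psi> x - \<psi> a \<ge> m * (x - a)"
    proof (rule mvt_ge[OF ax])
      fix y assume "a \<le> y" "y \<le> x"
      thus "(\<psi> has_real_derivative \<psi>' y) (at y)" using D1 B that by simp
    next
      fix y assume "a < y" "y < x"
      thus "\<psi>' y \<ge> m" using that by simp
    qed
    thus ?thesis by simp
  qed simp
  have UB: "\<exists>x\<ge>B. \<psi>' x > M" for M
  proof (rule ccontr)
    assume "\<not> (\<exists>x\<ge>B. \<psi>' x > M)"
    hence M: "\<And>x. x \<ge> B \<Longrightarrow> \<psi>' x \<le> M" using not_less by blast
    define P where "P = \<psi>' ` {B..}"
    define Ls' where "Ls' = Sup P"
    have Pb: "bdd_above P" unfolding P_def using M by (intro bdd_aboveI[of _ M]) auto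
    have Pne: "P \<noteq> {}" unfolding P_def by auto
    have le_sup: "\<psi>' x \<le> Ls'" if "x \<ge> B" for x
    proof -
      have "\<psi>' x \<in> P" unfolding P_def using that by auto
      thus ?thesis unfolding Ls'_def using Pb by (rule cSup_upper)
    qed
    have Lp: "Ls' > 0" using le_sup[of B] lle[of B] lpos by simp
    define L1 where "L1 = Ls' * (r - c / 2) / r"
    have "L1 < Ls'" unfolding L1_def using Lp r_pos c_pos by (simp add: field_simps)
    then obtain x1 where x1: "x1 \<ge> B" "\<psi>' x1 > L1"
      using less_cSupE[of L1 P] Pne unfolding Ls'_def P_def by auto
    have x1p: "x1 > 0" using x1 B by simp
    define C0 where "C0 = (r - c / 2) * x1 + h B"
    have glow: "g x \<ge> c / 2 * x - C0" if x: "x \<ge> x1" for x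
    proof -
      have xp: "x > 0" "x \<ge> B" using x x1 B by auto
      have px: "\<psi> x \<ge> \<psi> x1 + L1 * (x - x1)"
        by (rule psi_lin) (use x1 x mono' in \<open>auto intro: less_imp_le order.trans[OF less_imp_le[OF x1(2)]]\<close>)
      hence px': "\<psi> x \<ge> L1 * (x - x1)" using psi_nn[of x1] x1p by simp
      have dpos: "\<psi>' x > 0" using partI xp by simp
      have "r * \<psi> x / \<psi>' x \<ge> r * \<psi> x / Ls'"
        by (rule divide_left_mono) (use psi_nn[of x] xp r_pos dpos le_sup[of x] Lp in auto)
      also have "r * \<psi> x / Ls' \<ge> r * (L1 * (x - x1)) / Ls'"
        using px' r_pos Lp by (intro divide_right_mono mult_left_mono) auto
      moreover have "r * (L1 * (x - x1)) / Ls' = (r - c / 2) * (x - x1)"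
        unfolding L1_def using r_pos Lp by (simp add: field_simps)
      ultimately have t1: "r * \<psi> x / \<psi>' x \<ge> (r - c / 2) * (x - x1)" by linarith
      have "h x \<le> h B"
        using hdec'[of B x] B xp by (cases "x = B") auto
      hence "\<mu> x \<le> h B + (r - c) * x" unfolding h_def by simp
      hence "g x \<ge> (r - c / 2) * (x - x1) - (h B + (r - c) * x)" using t1 unfolding g_def by linarith
      moreover have "(r - c / 2) * (x - x1) - (h B + (r - c) * x) = c / 2 * x - C0"
        unfolding C0_def by (simp add: field_simps)
      ultimately show ?thesis by linarith
    qed
    define A where "A = \<sigma> 0 + Ls"
    have Lsn: "Ls \<ge> 0" using lipschitz_on_nonneg[OF Ls] .
    have Ap: "A > 0" unfolding A_def using sigma_pos[of 0] Lsn by simp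
    have sig_le: "\<sigma> x \<le> A * x" if "x \<ge> 1" for x
    proof -
      have "dist (\<sigma> x) (\<sigma> 0) \<le> Ls * dist x 0"
        using lipschitz_onD[OF Ls, of x 0] that by auto
      hence "\<sigma> x \<le> \<sigma> 0 + Ls * x" using that by (simp add: dist_real_def abs_le_iff)
      also have "\<dots> \<le> \<sigma> 0 * x + Ls * x" using that sigma_pos[of 0] by simp
      finally show ?thesis unfolding A_def by (simp add: algebra_simps)
    qed
    define X where "X = max (max x1 1) (4 * \<bar>C0\<bar> / c)"
    have X: "X \<ge> x1" "X \<ge> 1" "X \<ge> 4 * \<bar>C0\<bar> / c" unfolding X_def by auto
    define D where "D = l * c / (2 * A\<^sup>2)"
    have Dp: "D > 0" unfolding D_def using lpos c_pos Ap by simp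
    have pp_low: "\<psi>'' x \<ge> D / x" if x: "x \<ge> X" for x
    proof -
      have xp: "x \<ge> 1" "x \<ge> x1" "x \<ge> B" using x X x1 by auto
      have "c / 4 * x \<ge> \<bar>C0\<bar>"
      proof -
        have "c * x \<ge> c * (4 * \<bar>C0\<bar> / c)" using x X c_pos by (intro mult_left_mono) auto
        thus ?thesis using c_pos by simp
      qed
      hence gx: "g x \<ge> c / 4 * x" using glow[of x] xp by linarith
      have s0: "\<sigma> x > 0" using sigma_pos xp by simp
      have s2: "(\<sigma> x)\<^sup>2 \<le> (A * x)\<^sup>2"
        using sig_le[of x] xp s0 by (intro power_mono) auto
      have eq: "\<psi>'' x = 2 * (\<psi>' x * g x) / (\<sigma> x)\<^sup>2"
        using rel[of x] xp s0 by (simp add: field_simps)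
      have "2 * (\<psi>' x * g x) \<ge> 2 * (l * (c / 4 * x))"
        using lle[of x] xp gx lpos c_pos by (intro mult_left_mono mult_mono) auto
      hence "\<psi>'' x \<ge> 2 * (l * (c / 4 * x)) / (\<sigma> x)\<^sup>2"
        unfolding eq using s0 by (intro divide_right_mono) auto
      moreover have "2 * (l * (c / 4 * x)) / (\<sigma> x)\<^sup>2 \<ge> 2 * (l * (c / 4 * x)) / (A * x)\<^sup>2"
        using s2 s0 lpos c_pos xp Ap by (intro divide_left_mono) auto
      moreover have "2 * (l * (c / 4 * x)) / (A * x)\<^sup>2 = D / x"
        unfolding D_def using xp Ap by (simp add: field_simps power2_eq_square)
      ultimately show ?thesis by linarith
    qed
    define Y where "Y = X * exp ((Ls' + 1) / D)"
    have "exp ((Ls' + 1) / D) > 1" using Lp Dp by simp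
    hence Y: "Y > X" unfolding Y_def using X by simp
    have lnY: "ln Y = ln X + (Ls' + 1) / D" unfolding Y_def using X by (simp add: ln_mult)
    have "(\<psi>' Y - D * ln Y) - (\<psi>' X - D * ln X) \<ge> 0 * (Y - X)"
    proof (rule mvt_ge[OF Y])
      fix x assume "X \<le> x" "x \<le> Y"
      hence xp: "x > 0" "x \<ge> B" using X x1 by auto
      show "((\<lambda>x. \<psi>' x - D * ln x) has_real_derivative (\<psi>'' x - D / x)) (at x)"
        using xp by (auto intro!: derivative_eq_intros D2)
    next
      fix x assume "X < x" "x < Y"
      thus "\<psi>'' x - D / x \<ge> 0" using pp_low[of x] by simp
    qed
    hence "\<psi>' Y \<ge> \<psi>' X + D * (ln Y - ln X)" by (simp add: algebra_simps)
    also have "D * (ln Y - ln X) = Ls' + 1" using lnY Dp by simp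
    finally have "\<psi>' Y \<ge> \<psi>' X + Ls' + 1" by simp
    moreover have "\<psi>' X > 0" using partI X by simp
    moreover have "\<psi>' Y \<le> Ls'" using le_sup[of Y] Y X x1 by simp
    ultimately show False by simp
  qed
  have partIII: "(\<lambda>n::nat. real n / \<psi> (real n)) \<longlonglongrightarrow> 0"
    unfolding LIMSEQ_iff
  proof (intro allI impI)
    fix e :: real assume e: "e > 0"
    define M where "M = 4 / e"
    have Mpos: "M > 0" unfolding M_def using e by simp
    obtain xM where xM: "xM \<ge> B" "\<psi>' xM > M" using UB[of M] by auto
    have xMp: "xM > 0" using xM B by simp
    have gM: "\<psi>' y \<ge> M" if "xM \<le> y" for y using mono'[of xM y] xM that by simp
    define N where "N = nat \<lceil>2 * xM\<rceil>"
    show "\<exists>no. \<forall>n\<ge>no. norm (real n / \<psi> (real n) - 0) < e"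
    proof (intro exI allI impI)
      fix n assume n: "n \<ge> N"
      define x where "x = real n"
      have x2: "x \<ge> 2 * xM" using n unfolding x_def N_def by linarith
      have "\<psi> x \<ge> \<psi> xM + M * (x - xM)"
        by (rule psi_lin) (use xM x2 xMp gM in auto)
      moreover have "\<psi> xM \<ge> 0" using psi_nn xMp by simp
      moreover have "M * (x - xM) \<ge> M * (x / 2)" using x2 Mpos by (intro mult_left_mono) auto
      ultimately have px: "\<psi> x \<ge> M * x / 2" by simp
      have xp: "x > 0" using x2 xMp by simp
      have ppos: "\<psi> x > 0" using px xp Mpos by (smt (verit) mult_pos_pos half_gt_zero)
      have "x / \<psi> x \<le> x / (M * x / 2)"
        by (rule divide_left_mono) (use px xp Mpos ppos in auto)
      also have "\<dots> = e / 2" unfolding M_def using xp e by (simp add: field_simps)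
      finally have "x / \<psi> x \<le> e / 2" .
      hence "x / \<psi> x < e" using e by linarith
      moreover have "x / \<psi> x \<ge> 0" using xp ppos by simp
      ultimately show "norm (real n / \<psi> (real n) - 0) < e" unfolding x_def by simp
    qed
  qed
  show ?thesis using partI partII partIII by blast
qed

end
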